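(* For every $\sigma\in\Sigma$ there exist $B\in\mathbb{N}$ and a deck $\beta_1,\ldots,\beta_B\in\mathscr{B}$ such that $T^*_i(\beta_1,\ldots,\beta_B)\ge1$ for all $i\in\mathcal{N}$ and $T^\sigma(\beta_1,\ldots,\beta_B)=T^*(\beta_1,\ldots,\beta_B)$.
   Context: A ballot style consists of contests $\mathcal{C}=\{1,\ldots,C\}$, candidates $\mathcal{N}=\{1,\ldots,N\}$ partitioned into nonempty sets $\mathcal{N}_c$ ($c\in\mathcal{C}$), and positive integers $v_c$. A filled-out ballot is a subset $\beta\subseteq\mathcal{N}$; $\mathscr{B}=\{\beta\subseteq\mathcal{N}: |\mathcal{N}_c\cap\beta|\le v_c\ \forall c\}$. For $i\in\mathcal{N}_c$: $T^*_i(\beta_1,\ldots,\beta_B)=\sum_{b=1}^B\mathbb{I}\{i\in\beta_b\text{ and }|\mathcal{N}_c\cap\beta_b|\le v_c\}$, and for a bijection $\sigma$ of $\mathcal{N}$, $T^\sigma_i(\beta_1,\ldots,\beta_B)=\sum_{b=1}^B\mathbb{I}\{\sigma(i)\in\beta_b\text{ and }|\{\sigma(j)\in\beta_b: j\in\mathcal{N}_c\}|\le v_c\}$. $\Sigma$ is the set of non-identity bijections $\mathcal{N}\to\mathcal{N}$. *)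

theory Defs
  imports Main
begin

text \<open>Ballot style: contests {1..C}, candidates {1..N}, the candidate set of
contest c is Nc c, vote limit v c. A ballot is a set of candidates.\<close>

definition ballot_style :: "nat \<Rightarrow> nat \<Rightarrow> (nat \<Rightarrow> nat set) \<Rightarrow> (nat \<Rightarrow> nat) \<Rightarrow> bool" where
  "ballot_style C N Nc v \<longleftrightarrow>
     (\<forall>c\<in>{1..C}. Nc c \<noteq> {} \<and> 0 < v c) \<and>
     (\<forall>c\<in>{1..C}. \<forall>d\<in>{1..C}. c \<noteq> d \<longrightarrow> Nc c \<inter> Nc d = {}) \<and>
     (\<Union>c\<in>{1..C}. Nc c) = {1..N}"

definition valid_ballots :: "nat \<Rightarrow> nat \<Rightarrow> (nat \<Rightarrow> nat set) \<Rightarrow> (nat \<Rightarrow> nat) \<Rightarrow> nat set set" where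
  "valid_ballots C N Nc v = {\<beta>. \<beta> \<subseteq> {1..N} \<and> (\<forall>c\<in>{1..C}. card (Nc c \<inter> \<beta>) \<le> v c)}"

text \<open>T*_i of a deck (list of ballots); i belongs to the unique contest c with i in Nc c.\<close>
definition Tstar :: "nat \<Rightarrow> (nat \<Rightarrow> nat set) \<Rightarrow> (nat \<Rightarrow> nat) \<Rightarrow> nat set list \<Rightarrow> nat \<Rightarrow> nat" where
  "Tstar C Nc v bs i =
     length (filter (\<lambda>\<beta>. i \<in> \<beta> \<and> (\<forall>c\<in>{1..C}. i \<in> Nc c \<longrightarrow> card (Nc c \<inter> \<beta>) \<le> v c)) bs)"

definition Tsigma :: "nat \<Rightarrow> (nat \<Rightarrow> nat set) \<Rightarrow> (nat \<Rightarrow> nat) \<Rightarrow> (nat \<Rightarrow> nat) \<Rightarrow> nat set list \<Rightarrow> nat \<Rightarrow> nat" where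
  "Tsigma C Nc v \<sigma> bs i =
     length (filter (\<lambda>\<beta>. \<sigma> i \<in> \<beta> \<and>
        (\<forall>c\<in>{1..C}. i \<in> Nc c \<longrightarrow> card {\<sigma> j | j. j \<in> Nc c \<and> \<sigma> j \<in> \<beta>} \<le> v c)) bs)"

end

theory Submission
  imports Defs
begin

lemma len_filter_eq1:
  assumes "distinct xs" "i \<in> set xs" "\<And>k. k \<in> set xs \<Longrightarrow> P k \<longleftrightarrow> k = i"
  shows "length (filter P xs) = 1"
proof -
  have "filter P xs = filter (\<lambda>k. k = i) xs" using assms(3) by (rule filter_cong[OF refl])
  moreover have "set (filter (\<lambda>k. k = i) xs) = {i}" using assms(2) by auto
  moreover have "distinct (filter (\<lambda>k. k = i) xs)" using assms(1) by simp
  ultimately show ?thesis by (metis distinct_card card.empty card_insert_disjoint empty_iff finite.emptyI One_nat_def)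
qed

theorem proposition6:
  fixes C N :: nat and Nc :: "nat \<Rightarrow> nat set" and v :: "nat \<Rightarrow> nat" and \<sigma> :: "nat \<Rightarrow> nat"
  assumes "ballot_style C N Nc v"
    and "bij_betw \<sigma> {1..N} {1..N}"
    and "\<exists>i\<in>{1..N}. \<sigma> i \<noteq> i"
  shows "\<exists>bs :: nat set list.
           set bs \<subseteq> valid_ballots C N Nc v \<and>
           (\<forall>i\<in>{1..N}. Tstar C Nc v bs i \<ge> 1) \<and>
           (\<forall>i\<in>{1..N}. Tsigma C Nc v \<sigma> bs i = Tstar C Nc v bs i)"
proof -
  have vpos: "\<And>c. c \<in> {1..C} \<Longrightarrow> 0 < v c" using assms(1) unfolding ballot_style_def by blast
  have card1: "\<And>c k. card (Nc c \<inter> {k}) \<le> 1"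
    by (metis card_mono finite.emptyI finite_insert inf_le2 is_singletonI is_singleton_altdef)
  define bs where "bs = map (\<lambda>k. {k::nat}) [1..<N+1]"
  have T1: "Tstar C Nc v bs i = 1" if i: "i \<in> {1..N}" for i
    unfolding Tstar_def bs_def filter_map
    apply (subst length_map)
    apply (rule len_filter_eq1)
    using i card1 vpos by (auto intro: le_trans[OF card1] simp: Suc_le_eq)
  have T2: "Tsigma C Nc v \<sigma> bs i = 1" if i: "i \<in> {1..N}" for i
  proof -
    have si: "\<sigma> i \<in> {1..N}" using assms(2) i by (auto dest: bij_betw_apply)
    have c: "card {\<sigma> j | j. j \<in> Nc c \<and> \<sigma> j \<in> {k}} \<le> v c" if "c \<in> {1..C}" for c k
    proof -
      have "{\<sigma> j | j. j \<in> Nc c \<and> \<sigma> j \<in> {k}} \<subseteq> {k}" by auto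
      hence "card {\<sigma> j | j. j \<in> Nc c \<and> \<sigma> j \<in> {k}} \<le> card {k}"
        by (intro card_mono) auto
      hence "card {\<sigma> j | j. j \<in> Nc c \<and> \<sigma> j \<in> {k}} \<le> 1" by simp
      thus ?thesis using vpos[OF that] by linarith
    qed
    show ?thesis
    unfolding Tsigma_def bs_def filter_map
    apply (subst length_map)
    apply (rule len_filter_eq1)
    using si c by auto
  qed
  have "set bs \<subseteq> valid_ballots C N Nc v"
    unfolding bs_def valid_ballots_def using card1 vpos by (auto intro: le_trans[OF card1] simp: Suc_le_eq)
  thus ?thesis using T1 T2 by (intro exI[of _ bs]) auto
qed

end
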